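(* Let $v_!:=-\otimes_{k[\Delta_{a,\mathrm{inj}}]}k[\square_{\mathrm{inj}}]$ be left adjoint to $v^\ast$. The unit $\eta_M\colon M\to v^\ast v_!M$ need not induce an isomorphism on $H^a_{-1}$. In fact, for the representable right module $M=k[\Delta_{a,\mathrm{inj}}](-,[0])$ one has $H^a_{-1}(M)=0$, whereas $H^a_{-1}(v^\ast v_!M)\cong k$.
   Context: $k$ is a field; $k[\mathcal C]$ is the $k$-linearization of a small category; right modules over a $k$-linear category are $k$-linear functors from its opposite to $\mathrm{Vect}_k$; for a right module $X$ and $f\colon x\to y$, $X(f)\colon X(y)\to X(x)$. $\Delta_{a,\mathrm{inj}}$: objects $[n]=\{0<\dots<n\}$, $n\ge0$, and $[-1]=\varnothing$, injective order-preserving maps; $\delta^i\colon[n-1]\to[n]$ omits $i$. $\square_{\mathrm{inj}}$: objects $\square_n=\{0,1\}^n$, $n\ge0$, morphisms generated by cofaces $\delta_i^\varepsilon\colon\square_{n-1}\to\square_n$ ($\varepsilon\in\{0,1\}$, $1\le i\le n$) inserting $\varepsilon$ as $i$-th coordinate. The cubical sign embedding $v\colon k[\Delta_{a,\mathrm{inj}}]\to k[\square_{\mathrm{inj}}]$ is $[n]\mapsto\square_{n+1}$, $\delta^i\mapsto\delta^1_{i+1}-\delta^0_{i+1}$; $v^\ast$ is restriction. For a right $k[\Delta_{a,\mathrm{inj}}]$-module $Y$, $H^a_{-1}(Y)=\operatorname{coker}(Y(\delta^0)\colon Y([0])\to Y([-1]))$. *)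

theory Defs
  imports Main
begin

definition fsupp :: "('g \<Rightarrow> 'k::zero) \<Rightarrow> 'g set" where
  "fsupp \<phi> = {x. \<phi> x \<noteq> 0}"

text \<open>The free k-vector space on a set G of generators, inside the ambient space of all functions.\<close>
definition free_on :: "'g set \<Rightarrow> ('g \<Rightarrow> 'k::zero) set" where
  "free_on G = {\<phi>. finite (fsupp \<phi>) \<and> fsupp \<phi> \<subseteq> G}"

definition basis_vec :: "'g \<Rightarrow> 'g \<Rightarrow> 'k::{zero,one}" where
  "basis_vec g = (\<lambda>x. if x = g then 1 else 0)"

definition lspan :: "('g \<Rightarrow> 'k::field) set \<Rightarrow> ('g \<Rightarrow> 'k) set" where
  "lspan S = {\<phi>. \<exists>F c. finite F \<and> F \<subseteq> S \<and> \<phi> = (\<lambda>x. \<Sum>s\<in>F. c s * s x)}"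

text \<open>Object [n] (n >= -1) is encoded by its cardinality n+1 :: nat.
  A morphism [n] -> [m] (injective, order preserving) is encoded by the indicator list
  of its image: a bool list of length m+1 with exactly n+1 entries True.\<close>

definition dmors :: "nat \<Rightarrow> nat \<Rightarrow> bool list set" where
  "dmors c d = {L. length L = d \<and> count_list L True = c}"

text \<open>dcomp g f = g \<circ> f\<close>
fun dcomp :: "bool list \<Rightarrow> bool list \<Rightarrow> bool list" where
  "dcomp [] fs = []"
| "dcomp (True # gs) fs = hd fs # dcomp gs (tl fs)"
| "dcomp (False # gs) fs = False # dcomp gs fs"

text \<open>dcoface n i = delta^i : [n-1] -> [n] (omits i), i.e. cardinality n -> n+1.\<close>
definition dcoface :: "nat \<Rightarrow> nat \<Rightarrow> bool list" where
  "dcoface n i = map (\<lambda>j. j \<noteq> i) [0..<n+1]"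

text \<open>A morphism square_p -> square_q is a list of length q over bool option with exactly p
  entries None: the map fills the None slots (in order) with the input coordinates and the
  slots Some e with the constant e.  These are exactly the composites of cofaces.\<close>

definition cmors :: "nat \<Rightarrow> nat \<Rightarrow> bool option list set" where
  "cmors p q = {b. length b = q \<and> count_list b None = p}"

text \<open>ccomp g f = g \<circ> f\<close>
fun ccomp :: "bool option list \<Rightarrow> bool option list \<Rightarrow> bool option list" where
  "ccomp [] fs = []"
| "ccomp (None # gs) fs = hd fs # ccomp gs (tl fs)"
| "ccomp (Some e # gs) fs = Some e # ccomp gs fs"

text \<open>ccoface n i e = delta_i^e : square_{n-1} -> square_n (1 <= i <= n).\<close>
definition ccoface :: "nat \<Rightarrow> nat \<Rightarrow> bool \<Rightarrow> bool option list" where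
  "ccoface n i e = map (\<lambda>j. if j = i then Some e else None) [1..<n+1]"

text \<open>On objects v [n] = square_{n+1}, i.e. cardinality c maps to square_c.
  On morphisms, v(f) is the k-linear combination (an element of k[square_inj]) obtained by
  composing the v(delta^i) = delta^1_{i+1} - delta^0_{i+1}: for f with omitted positions
  i_1<...<i_r one gets the sum over all ways of inserting constants at the omitted positions,
  with sign (-1)^(number of inserted 0s).\<close>
definition vmor :: "bool list \<Rightarrow> bool option list \<Rightarrow> 'k::field" where
  "vmor L b = (if length b = length L \<and> (\<forall>j<length L. (L!j \<longleftrightarrow> b!j = None))
               then (-1) ^ count_list b (Some False) else 0)"


definition postcomp :: "(bool option list \<Rightarrow> 'k::field) \<Rightarrow> bool option list \<Rightarrow> bool option list \<Rightarrow> 'k" where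
  "postcomp \<psi> \<beta> = (\<lambda>b. \<Sum>\<gamma>\<in>{\<gamma>. \<psi> \<gamma> \<noteq> 0 \<and> ccomp \<gamma> \<beta> = b}. \<psi> \<gamma>)"

definition precomp :: "(bool option list \<Rightarrow> 'k::field) \<Rightarrow> bool option list \<Rightarrow> bool option list \<Rightarrow> 'k" where
  "precomp \<psi> \<beta> = (\<lambda>b. \<Sum>\<gamma>\<in>{\<gamma>. \<psi> \<gamma> \<noteq> 0 \<and> ccomp \<beta> \<gamma> = b}. \<psi> \<gamma>)"

text \<open>A right k[Delta_{a,inj}]-module Y is presented by: for each object (cardinality c) a
  subspace A c of an ambient space of functions, a subspace R c \<subseteq> A c, Y(c) = A c / R c,
  and for each morphism f a linear map act f of the ambient space inducing Y(f).\<close>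

text \<open>H^a_{-1}(Y) = coker(Y(delta^0) : Y([0]) -> Y([-1])) = A 0 / (R 0 + act delta^0 (A 1)).\<close>
definition Hm1 :: "(nat \<Rightarrow> ('g \<Rightarrow> 'k::field) set) \<Rightarrow> (nat \<Rightarrow> ('g \<Rightarrow> 'k) set)
                   \<Rightarrow> (bool list \<Rightarrow> ('g \<Rightarrow> 'k) \<Rightarrow> ('g \<Rightarrow> 'k)) \<Rightarrow> ('g \<Rightarrow> 'k) set \<times> ('g \<Rightarrow> 'k) set" where
  "Hm1 A R act = (A 0, {(\<lambda>x. r x + t x) | r t. r \<in> R 0 \<and> t \<in> act (dcoface 0 0) ` A 1})"

text \<open>A subquotient (A, S) represents the vector space A / S.\<close>
definition sq_zero :: "('g \<Rightarrow> 'k::field) set \<times> ('g \<Rightarrow> 'k) set \<Rightarrow> bool" where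
  "sq_zero Q \<longleftrightarrow> fst Q \<subseteq> snd Q"

definition sq_iso_k :: "('g \<Rightarrow> 'k::field) set \<times> ('g \<Rightarrow> 'k) set \<Rightarrow> bool" where
  "sq_iso_k Q \<longleftrightarrow> (\<exists>w\<in>fst Q. w \<notin> snd Q \<and>
      (\<forall>a\<in>fst Q. \<exists>c. \<exists>s\<in>snd Q. a = (\<lambda>x. s x + c * w x)))"

text \<open>M(c) is free on dmors c d; M(f) is precomposition alpha' \<mapsto> alpha' \<circ> f.\<close>
definition rep_carrier :: "nat \<Rightarrow> nat \<Rightarrow> (bool list \<Rightarrow> 'k::field) set" where
  "rep_carrier d c = free_on (dmors c d)"

definition rep_act :: "bool list \<Rightarrow> (bool list \<Rightarrow> 'k::field) \<Rightarrow> bool list \<Rightarrow> 'k" where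
  "rep_act f \<phi> = (\<lambda>\<alpha>. \<Sum>\<alpha>'\<in>{\<alpha>'. \<phi> \<alpha>' \<noteq> 0 \<and> dcomp \<alpha>' f = \<alpha>}. \<phi> \<alpha>')"

text \<open>(v_! M)(square_p) = (\<Oplus>_c M(c) \<otimes>_k k[square](square_p, v c)) / relations
  M(f)(m) \<otimes> b = m \<otimes> v(f) \<circ> b.  Since M(c) is free on dmors c d, the summand is free on
  pairs (alpha, beta) with alpha \<in> dmors c d, beta \<in> cmors p c; the relations are spanned by
  their instances on basis elements.\<close>
definition vsh_carrier :: "nat \<Rightarrow> nat \<Rightarrow> (bool list \<times> bool option list \<Rightarrow> 'k::field) set" where
  "vsh_carrier d p = free_on {(\<alpha>, \<beta>). \<exists>c. \<alpha> \<in> dmors c d \<and> \<beta> \<in> cmors p c}"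

definition vsh_rel :: "nat \<Rightarrow> nat \<Rightarrow> (bool list \<times> bool option list \<Rightarrow> 'k::field) set" where
  "vsh_rel d p = lspan
     {(\<lambda>x. basis_vec (dcomp \<alpha>' f, \<beta>) x
           - (if fst x = \<alpha>' then postcomp (vmor f) \<beta> (snd x) else 0))
      | f \<alpha>' \<beta> c c'. f \<in> dmors c c' \<and> \<alpha>' \<in> dmors c' d \<and> \<beta> \<in> cmors p c}"

text \<open>(v^* v_! M)(f) = (v_! M)(v f): alpha \<otimes> beta \<mapsto> alpha \<otimes> beta \<circ> v(f).\<close>
definition vsh_act :: "bool list \<Rightarrow> (bool list \<times> bool option list \<Rightarrow> 'k::field)
                       \<Rightarrow> (bool list \<times> bool option list \<Rightarrow> 'k)" where
  "vsh_act f \<phi> = (\<lambda>(a, b). \<Sum>\<beta>\<in>{\<beta>. \<phi> (a, \<beta>) \<noteq> 0}. \<phi> (a, \<beta>) * precomp (vmor f) \<beta> b)"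

end

theory Submission
  imports Defs
begin

lemma postcomp_fin:
  assumes "finite G" "\<And>\<gamma>. \<psi> \<gamma> \<noteq> 0 \<Longrightarrow> \<gamma> \<in> G"
  shows "postcomp \<psi> \<beta> b = (\<Sum>\<gamma>\<in>G. if ccomp \<gamma> \<beta> = b then \<psi> \<gamma> else 0)"
proof -
  have "(\<Sum>\<gamma>\<in>G. if ccomp \<gamma> \<beta> = b then \<psi> \<gamma> else 0) = (\<Sum>\<gamma>\<in>{\<gamma>\<in>G. ccomp \<gamma> \<beta> = b}. \<psi> \<gamma>)"
    using assms(1) by (simp add: sum.inter_filter)
  also have "\<dots> = (\<Sum>\<gamma>\<in>{\<gamma>. \<psi> \<gamma> \<noteq> 0 \<and> ccomp \<gamma> \<beta> = b}. \<psi> \<gamma>)"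
    by (rule sum.mono_neutral_right) (use assms in auto)
  finally show ?thesis unfolding postcomp_def by simp
qed

lemma precomp_fin:
  assumes "finite G" "\<And>\<gamma>. \<psi> \<gamma> \<noteq> 0 \<Longrightarrow> \<gamma> \<in> G"
  shows "precomp \<psi> \<beta> b = (\<Sum>\<gamma>\<in>G. if ccomp \<beta> \<gamma> = b then \<psi> \<gamma> else 0)"
proof -
  have "(\<Sum>\<gamma>\<in>G. if ccomp \<beta> \<gamma> = b then \<psi> \<gamma> else 0) = (\<Sum>\<gamma>\<in>{\<gamma>\<in>G. ccomp \<beta> \<gamma> = b}. \<psi> \<gamma>)"
    using assms(1) by (simp add: sum.inter_filter)
  also have "\<dots> = (\<Sum>\<gamma>\<in>{\<gamma>. \<psi> \<gamma> \<noteq> 0 \<and> ccomp \<beta> \<gamma> = b}. \<psi> \<gamma>)"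
    by (rule sum.mono_neutral_right) (use assms in auto)
  finally show ?thesis unfolding precomp_def by simp
qed

lemma len1: "length L = Suc 0 \<longleftrightarrow> (\<exists>x. L = [x])"
  by (cases L) auto

lemma vmor_nil: "vmor [] \<gamma> \<noteq> 0 \<Longrightarrow> \<gamma> \<in> {[]}"
  by (simp add: vmor_def split: if_splits)

lemma vmor_T: "vmor [True] \<gamma> \<noteq> 0 \<Longrightarrow> \<gamma> \<in> {[None]}"
  by (auto simp add: vmor_def len1 split: if_splits)

lemma vmor_F: "vmor [False] \<gamma> \<noteq> 0 \<Longrightarrow> \<gamma> \<in> {[Some True], [Some False]}"
  by (auto simp add: vmor_def len1 split: if_splits)

lemma pc_nil: "postcomp (vmor []) \<beta> b = (if ccomp [] \<beta> = b then (1::'k::field) else 0)"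
  by (subst postcomp_fin[OF _ vmor_nil]) (auto simp: vmor_def)

lemma pc_T: "postcomp (vmor [True]) \<beta> b = (if ccomp [None] \<beta> = b then (1::'k::field) else 0)"
  by (subst postcomp_fin[OF _ vmor_T]) (auto simp: vmor_def)

lemma pc_F: "postcomp (vmor [False]) \<beta> b = (if ccomp [Some True] \<beta> = b then (1::'k::field) else 0)
   + (if ccomp [Some False] \<beta> = b then -1 else 0)"
  by (subst postcomp_fin[OF _ vmor_F]) (auto simp: vmor_def)

lemma prc_F: "precomp (vmor [False]) [None] b = (if b = [Some True] then (1::'k::field) else 0)
   + (if b = [Some False] then -1 else 0)"
  by (subst precomp_fin[OF _ vmor_F]) (auto simp: vmor_def)

lemma dmors01: "\<alpha> \<in> dmors c (Suc 0) \<longleftrightarrow> (\<alpha> = [False] \<and> c = 0) \<or> (\<alpha> = [True] \<and> c = 1)"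
  by (cases \<alpha>) (auto simp: dmors_def)

lemma dmors00: "\<alpha> \<in> dmors c 0 \<longleftrightarrow> \<alpha> = [] \<and> c = 0"
  by (auto simp: dmors_def)

lemma cmors00: "\<beta> \<in> cmors 0 0 \<longleftrightarrow> \<beta> = []"
  by (auto simp: cmors_def)

lemma cmors01: "\<beta> \<in> cmors 0 (Suc 0) \<longleftrightarrow> \<beta> = [Some True] \<or> \<beta> = [Some False]"
  by (cases \<beta>) (auto simp: cmors_def)

lemma cmors11: "\<beta> \<in> cmors (Suc 0) (Suc 0) \<longleftrightarrow> \<beta> = [None]"
  apply (cases \<beta>) apply (auto simp: cmors_def split: if_splits)
  done

lemma gen0: "{(\<alpha>, \<beta>). \<exists>c. \<alpha> \<in> dmors c 1 \<and> \<beta> \<in> cmors 0 c}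
   = {([False], []), ([True], [Some True]), ([True], [Some False])}"
  by (auto simp: dmors01 cmors00 cmors01)

lemma gen1: "{(\<alpha>, \<beta>). \<exists>c. \<alpha> \<in> dmors c 1 \<and> \<beta> \<in> cmors 1 c} = {([True], [None])}"
  apply (auto simp: dmors01 cmors11)
  apply (auto simp: cmors_def)
  done

lemma rel_L:
  fixes s :: "bool list \<times> bool option list \<Rightarrow> 'k::field"
  assumes "s \<in> {(\<lambda>x. basis_vec (dcomp \<alpha>' f, \<beta>) x
           - (if fst x = \<alpha>' then postcomp (vmor f) \<beta> (snd x) else 0))
      | f \<alpha>' \<beta> c c'. f \<in> dmors c c' \<and> \<alpha>' \<in> dmors c' 1 \<and> \<beta> \<in> cmors 0 c}"
  shows "s ([True], [Some True]) + s ([True], [Some False]) = 0"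
proof -
  obtain f \<alpha>' \<beta> c c' where s: "s = (\<lambda>x. basis_vec (dcomp \<alpha>' f, \<beta>) x
           - (if fst x = \<alpha>' then postcomp (vmor f) \<beta> (snd x) else 0))"
    and h: "f \<in> dmors c c'" "\<alpha>' \<in> dmors c' 1" "\<beta> \<in> cmors 0 c"
    using assms by blast
  from h(2) have "(\<alpha>' = [False] \<and> c' = 0) \<or> (\<alpha>' = [True] \<and> c' = 1)" by (simp add: dmors01)
  then show ?thesis
  proof
    assume a: "\<alpha>' = [False] \<and> c' = 0"
    then have "f = []" "c = 0" using h(1) dmors00 by auto
    then show ?thesis using a s by (simp add: basis_vec_def)
  next
    assume a: "\<alpha>' = [True] \<and> c' = 1"
    then have "(f = [False] \<and> c = 0) \<or> (f = [True] \<and> c = 1)" using h(1) dmors01 by auto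
    then show ?thesis
    proof
      assume b: "f = [False] \<and> c = 0"
      then have "\<beta> = []" using h(3) cmors00 by auto
      then show ?thesis using a b s by (simp add: basis_vec_def pc_F)
    next
      assume b: "f = [True] \<and> c = 1"
      then have "\<beta> = [Some True] \<or> \<beta> = [Some False]" using h(3) cmors01 by auto
      then show ?thesis using a b s by (auto simp add: basis_vec_def pc_T)
    qed
  qed
qed

lemma act_A1:
  fixes \<phi> :: "bool list \<times> bool option list \<Rightarrow> 'k::field"
  assumes "\<phi> \<in> vsh_carrier 1 1"
  shows "vsh_act [False] \<phi> = (\<lambda>(a, b). if a = [True] then \<phi> ([True], [None]) *
     ((if b = [Some True] then 1 else 0) + (if b = [Some False] then -1 else 0)) else 0)"
proof -
  have sup: "\<phi> x \<noteq> 0 \<Longrightarrow> x = ([True], [None])" for x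
    using assms unfolding vsh_carrier_def free_on_def fsupp_def gen1 by auto
  show ?thesis
  proof (rule ext, clarify)
    fix a b
    show "vsh_act [False] \<phi> (a, b) = (if a = [True] then \<phi> ([True], [None]) *
     ((if b = [Some True] then 1 else 0) + (if b = [Some False] then -1 else 0)) else 0)"
    proof (cases "a = [True] \<and> \<phi> ([True], [None]) \<noteq> 0")
      case True
      then have "{\<beta>. \<phi> (a, \<beta>) \<noteq> 0} = {[None]}" using sup by auto
      then show ?thesis using True by (simp add: vsh_act_def prc_F)
    next
      case False
      then have "{\<beta>. \<phi> (a, \<beta>) \<noteq> 0} = {}" using sup by fastforce
      then show ?thesis using False by (auto simp add: vsh_act_def)
    qed
  qed
qed

theorem proposition4p6:
  shows "sq_zero (Hm1 (rep_carrier 1) (\<lambda>_. {\<lambda>_ :: bool list. 0 :: 'k::field}) rep_act)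
       \<and> sq_iso_k (Hm1 (vsh_carrier 1) (vsh_rel 1 :: nat \<Rightarrow> (bool list \<times> bool option list \<Rightarrow> 'k) set) vsh_act)"
proof
  show "sq_zero (Hm1 (rep_carrier 1) (\<lambda>_. {\<lambda>_ :: bool list. 0 :: 'k::field}) rep_act)"
    unfolding sq_zero_def Hm1_def fst_conv snd_conv
  proof (rule subsetI)
    fix \<phi> :: "bool list \<Rightarrow> 'k"
    assume "\<phi> \<in> rep_carrier 1 0"
    then have sup: "\<phi> x \<noteq> 0 \<Longrightarrow> x = [False]" for x
      unfolding rep_carrier_def free_on_def fsupp_def by (auto simp: dmors01)
    define \<psi> where "\<psi> = (\<lambda>x. if x = [True] then \<phi> [False] else (0::'k))"
    have psiC: "\<psi> \<in> rep_carrier 1 1"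
      unfolding rep_carrier_def free_on_def fsupp_def \<psi>_def by (auto simp: dmors01)
    have phiE: "\<phi> = rep_act (dcoface 0 0) \<psi>"
    proof
      fix \<alpha>
      have dc: "dcoface 0 0 = [False]" by (simp add: dcoface_def)
      show "\<phi> \<alpha> = rep_act (dcoface 0 0) \<psi> \<alpha>"
      proof (cases "\<alpha> = [False] \<and> \<phi> [False] \<noteq> 0")
        case True
        then have "{\<alpha>'. \<psi> \<alpha>' \<noteq> 0 \<and> dcomp \<alpha>' [False] = \<alpha>} = {[True]}"
          by (auto simp: \<psi>_def)
        then show ?thesis using True by (simp add: rep_act_def dc \<psi>_def)
      next
        case False
        then have "{\<alpha>'. \<psi> \<alpha>' \<noteq> 0 \<and> dcomp \<alpha>' [False] = \<alpha>} = {}"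
          by (auto simp: \<psi>_def)
        moreover have "\<phi> \<alpha> = 0" using False sup by blast
        ultimately show ?thesis by (simp only: rep_act_def dc sum.empty)
      qed
    qed
    have im: "\<phi> \<in> rep_act (dcoface 0 0) ` rep_carrier 1 1"
      by (subst phiE, rule imageI, rule psiC)
    show "\<phi> \<in> {\<lambda>x. r x + t x |r t. r \<in> {\<lambda>_. 0} \<and> t \<in> rep_act (dcoface 0 0) ` rep_carrier 1 1}"
      using im by (intro CollectI exI[of _ "\<lambda>_. 0"] exI[of _ \<phi>] conjI) auto
  qed
next
  define RS :: "(bool list \<times> bool option list \<Rightarrow> 'k) set" where "RS = {(\<lambda>x. basis_vec (dcomp \<alpha>' f, \<beta>) x
           - (if fst x = \<alpha>' then postcomp (vmor f) \<beta> (snd x) else 0))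
      | f \<alpha>' \<beta> c c'. f \<in> dmors c c' \<and> \<alpha>' \<in> dmors c' 1 \<and> \<beta> \<in> cmors 0 c}"
  have relR: "vsh_rel 1 0 = lspan RS" unfolding vsh_rel_def RS_def by simp
  have dc: "dcoface 0 0 = [False]" by (simp add: dcoface_def)
  define p1 where "p1 = ([True], [Some True])"
  define p2 where "p2 = ([True], [Some False])"
  define p0 where "p0 = ([False], ([] :: bool option list))"
  define w where "w = (\<lambda>x. if x = p1 then 1 else (0::'k))"
  have C0: "vsh_carrier 1 0 = free_on {p0, p1, p2}"
    unfolding vsh_carrier_def gen0 p0_def p1_def p2_def by simp
  have wC: "w \<in> vsh_carrier 1 0"
    unfolding C0 free_on_def fsupp_def w_def by auto
  have RL: "r p1 + r p2 = 0" if rin: "r \<in> lspan RS" for r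
  proof -
    obtain F c where F: "finite F" "F \<subseteq> RS" "r = (\<lambda>x. \<Sum>s\<in>F. c s * s x)"
      using rin unfolding lspan_def by blast
    have "r p1 + r p2 = (\<Sum>s\<in>F. c s * (s p1 + s p2))"
      by (simp add: F(3) sum.distrib distrib_left)
    also have "\<dots> = 0"
    proof (rule sum.neutral, rule ballI)
      fix s assume "s \<in> F"
      then have "s \<in> RS" using F(2) by blast
      then have "s p1 + s p2 = 0" unfolding RS_def p1_def p2_def by (rule rel_L)
      then show "c s * (s p1 + s p2) = 0" by simp
    qed
    finally show ?thesis .
  qed
  have TL: "t p1 + t p2 = 0" if "t \<in> vsh_act (dcoface 0 0) ` vsh_carrier 1 1" for t
    using that by (auto simp: dc act_A1 p1_def p2_def)
  have wS: "w \<notin> snd (Hm1 (vsh_carrier 1) (vsh_rel 1) vsh_act)"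
  proof
    assume "w \<in> snd (Hm1 (vsh_carrier 1) (vsh_rel 1) vsh_act)"
    then obtain r t where rt: "r \<in> lspan RS" "t \<in> vsh_act (dcoface 0 0) ` vsh_carrier 1 1"
      "w = (\<lambda>x. r x + t x)"
      unfolding Hm1_def relR by auto
    have "w p1 + w p2 = (r p1 + r p2) + (t p1 + t p2)" using rt(3) by simp
    also have "\<dots> = 0" using RL[OF rt(1)] TL[OF rt(2)] by simp
    finally show False by (simp add: w_def p1_def p2_def)
  qed
  have ex: "\<exists>c. \<exists>s\<in>snd (Hm1 (vsh_carrier 1) (vsh_rel 1) vsh_act). a = (\<lambda>x. s x + c * w x)"
    if aC: "a \<in> vsh_carrier 1 0" for a :: "bool list \<times> bool option list \<Rightarrow> 'k"
  proof -
    have sup: "x \<noteq> p0 \<Longrightarrow> x \<noteq> p1 \<Longrightarrow> x \<noteq> p2 \<Longrightarrow> a x = 0" for x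
      using aC unfolding C0 free_on_def fsupp_def by auto
    define r0 where "r0 = (\<lambda>x. basis_vec (dcomp [True] [False], []) x
           - (if fst x = [True] then postcomp (vmor [False]) [] (snd x) else (0::'k)))"
    have r0RS: "r0 \<in> RS"
      unfolding r0_def RS_def
      by (rule CollectI, rule exI[of _ "[False]"], rule exI[of _ "[True]"], rule exI[of _ "[]"],
          rule exI[of _ 0], rule exI[of _ 1]) (simp add: dmors01 cmors00)
    define r where "r = (\<lambda>x. \<Sum>s\<in>{r0}. (\<lambda>_. a p0) s * s x)"
    have rL: "r \<in> lspan RS" unfolding lspan_def r_def mem_Collect_eq
      by (rule exI[of _ "{r0}"], rule exI[of _ "\<lambda>_. a p0"]) (simp add: r0RS)
    define \<phi> :: "bool list \<times> bool option list \<Rightarrow> 'k" where "\<phi> = (\<lambda>x. if x = ([True], [None]) then a p0 - a p2 else (0::'k))"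
    have \<phi>C: "\<phi> \<in> vsh_carrier 1 1"
      unfolding vsh_carrier_def gen1 free_on_def fsupp_def \<phi>_def by auto
    define t where "t = vsh_act (dcoface 0 0) \<phi>"
    have tI: "t \<in> vsh_act (dcoface 0 0) ` vsh_carrier 1 1" using \<phi>C t_def by blast
    have tv: "t = (\<lambda>(x, b). if x = [True] then (a p0 - a p2) *
     ((if b = [Some True] then 1 else 0) + (if b = [Some False] then -1 else 0)) else 0)"
    proof -
      have "\<phi> ([True], [None]) = a p0 - a p2" by (simp add: \<phi>_def)
      then show ?thesis unfolding t_def dc act_A1[OF \<phi>C] by (simp only:)
    qed
    have "(\<lambda>x. r x + t x) \<in> snd (Hm1 (vsh_carrier 1) (vsh_rel 1) vsh_act)"
      unfolding Hm1_def relR using rL tI by auto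
    moreover have "a = (\<lambda>x. r x + t x + (a p1 + a p2) * w x)"
    proof
      fix x :: "bool list \<times> bool option list"
      obtain u b where x: "x = (u, b)" by force
      show "a x = r x + t x + (a p1 + a p2) * w x"
        using sup[of x]
        by (auto simp: x r_def r0_def tv w_def basis_vec_def pc_F p0_def p1_def p2_def algebra_simps)
    qed
    ultimately show ?thesis
      by (intro exI[of _ "a p1 + a p2"] bexI[of _ "\<lambda>x. r x + t x"]) simp_all
  qed
  show "sq_iso_k (Hm1 (vsh_carrier 1) (vsh_rel 1 :: nat \<Rightarrow> (bool list \<times> bool option list \<Rightarrow> 'k) set) vsh_act)"
    unfolding sq_iso_k_def
  proof (rule bexI[of _ w], intro conjI ballI)
    show "w \<notin> snd (Hm1 (vsh_carrier 1) (vsh_rel 1) vsh_act)" by (rule wS)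
    show "w \<in> fst (Hm1 (vsh_carrier 1) (vsh_rel 1 :: nat \<Rightarrow> (bool list \<times> bool option list \<Rightarrow> 'k) set) vsh_act)"
      using wC by (simp add: Hm1_def)
    fix a assume "a \<in> fst (Hm1 (vsh_carrier 1) (vsh_rel 1 :: nat \<Rightarrow> (bool list \<times> bool option list \<Rightarrow> 'k) set) vsh_act)"
    then have "a \<in> vsh_carrier 1 0" by (simp add: Hm1_def)
    then show "\<exists>c. \<exists>s\<in>snd (Hm1 (vsh_carrier 1) (vsh_rel 1) vsh_act). a = (\<lambda>x. s x + c * w x)"
      by (rule ex)
  qed
qed

end
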